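(* Let $G$ be a topological group with identity $e$, equipped with its left uniformity. If $U\subseteq G\times G$ belongs to the left uniformity and is an equivalence relation on $G$, then $A=\bigcap_{g\in G} g\,U[g^{-1}]$ is an open subgroup of $G$ with $A_L\subseteq U$. Consequently the sets $A_L$, $A$ ranging over the open subgroups of $G$, form a base for the uniformity $\mathcal U_{eq}$ associated to the left uniformity, and the following are equivalent: (i) $G$ is uniformly $0$-dimensional with respect to the left uniformity; (ii) $G$ is strongly $0$-dimensional at $e$ with respect to the left uniformity; (iii) $G$ is strongly $0$-dimensional with respect to the left uniformity; (iv) the open subgroups of $G$ form a local base for the topology of $G$ at $e$. The same holds with the right uniformity and $A_R$.
   Context: A topological group is a group with a topology making multiplication $G\times G\to G$ and inversion continuous. For $A\subseteq G$: $A_L=\{(x,y): x^{-1}y\in A\}$, $A_R=\{(x,y): yx^{-1}\in A\}$; for $U\subseteq G\times G$, $U[x]=\{y:(x,y)\in U\}$. The left (resp. right) uniformity of $G$ is the uniformity having base $\{W_L: W \text{ open}, e\in W\}$ (resp. $\{W_R\}$); a uniformity on $X$ is a nonempty collection of subsets of $X\times X$ containing the diagonal, closed under transposition, finite intersections and supersets, and such that each member contains $V*V=\{(x,z):\exists y,(x,y),(y,z)\in V\}$ for some member $V$. $\mathcal U_{eq}$ is the uniformity with base the members of the given uniformity that are equivalence relations. $A,B$ are uniformly separated if some member $U$ contains no $(x,y)$ with $x\in A$, $y\in B$. Uniformly $0$-dimensional: the uniformity has a base of equivalence relations. Strongly $0$-dimensional at $x$: for each open $W\ni x$ there is $V\subseteq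 W$ with $x\in V$ and $V$ uniformly separated from its complement; strongly $0$-dimensional: this holds at every point. *)

theory Defs
  imports "HOL-Analysis.Analysis" "HOL-Algebra.Coset"
begin

definition topological_group :: "('a, 'b) monoid_scheme \<Rightarrow> 'a topology \<Rightarrow> bool" where
  "topological_group G T \<longleftrightarrow> group G \<and> topspace T = carrier G
     \<and> continuous_map (prod_topology T T) T (\<lambda>(x, y). x \<otimes>\<^bsub>G\<^esub> y)
     \<and> continuous_map T T (\<lambda>x. inv\<^bsub>G\<^esub> x)"

definition left_ent :: "('a, 'b) monoid_scheme \<Rightarrow> 'a set \<Rightarrow> ('a \<times> 'a) set" where
  "left_ent G A = {(x, y). x \<in> carrier G \<and> y \<in> carrier G \<and> inv\<^bsub>G\<^esub> x \<otimes>\<^bsub>G\<^esub> y \<in> A}"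

definition right_ent :: "('a, 'b) monoid_scheme \<Rightarrow> 'a set \<Rightarrow> ('a \<times> 'a) set" where
  "right_ent G A = {(x, y). x \<in> carrier G \<and> y \<in> carrier G \<and> y \<otimes>\<^bsub>G\<^esub> inv\<^bsub>G\<^esub> x \<in> A}"

definition uniformity_generated :: "'a set \<Rightarrow> ('a \<times> 'a) set set \<Rightarrow> ('a \<times> 'a) set set" where
  "uniformity_generated X B = {U. U \<subseteq> X \<times> X \<and> (\<exists>V\<in>B. V \<subseteq> U)}"

definition left_uniformity :: "('a, 'b) monoid_scheme \<Rightarrow> 'a topology \<Rightarrow> ('a \<times> 'a) set set" where
  "left_uniformity G T =
     uniformity_generated (carrier G) {left_ent G W | W. openin T W \<and> \<one>\<^bsub>G\<^esub> \<in> W}"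

definition right_uniformity :: "('a, 'b) monoid_scheme \<Rightarrow> 'a topology \<Rightarrow> ('a \<times> 'a) set set" where
  "right_uniformity G T =
     uniformity_generated (carrier G) {right_ent G W | W. openin T W \<and> \<one>\<^bsub>G\<^esub> \<in> W}"

definition eq_uniformity :: "'a set \<Rightarrow> ('a \<times> 'a) set set \<Rightarrow> ('a \<times> 'a) set set" where
  "eq_uniformity X \<U> = uniformity_generated X {U \<in> \<U>. equiv X U}"

definition is_uniformity_base :: "('a \<times> 'a) set set \<Rightarrow> ('a \<times> 'a) set set \<Rightarrow> bool" where
  "is_uniformity_base B \<U> \<longleftrightarrow> B \<subseteq> \<U> \<and> (\<forall>U\<in>\<U>. \<exists>V\<in>B. V \<subseteq> U)"

definition uniformly_separated :: "('a \<times> 'a) set set \<Rightarrow> 'a set \<Rightarrow> 'a set \<Rightarrow> bool" where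
  "uniformly_separated \<U> A B \<longleftrightarrow> (\<exists>U\<in>\<U>. \<forall>x\<in>A. \<forall>y\<in>B. (x, y) \<notin> U)"

definition uniformly_zero_dim :: "'a set \<Rightarrow> ('a \<times> 'a) set set \<Rightarrow> bool" where
  "uniformly_zero_dim X \<U> \<longleftrightarrow> is_uniformity_base {U \<in> \<U>. equiv X U} \<U>"

definition strongly_zero_dim_at :: "'a topology \<Rightarrow> ('a \<times> 'a) set set \<Rightarrow> 'a \<Rightarrow> bool" where
  "strongly_zero_dim_at T \<U> x \<longleftrightarrow>
     (\<forall>W. openin T W \<and> x \<in> W \<longrightarrow>
        (\<exists>V. V \<subseteq> W \<and> x \<in> V \<and> uniformly_separated \<U> V (topspace T - V)))"

definition strongly_zero_dim :: "'a topology \<Rightarrow> ('a \<times> 'a) set set \<Rightarrow> bool" where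
  "strongly_zero_dim T \<U> \<longleftrightarrow> (\<forall>x\<in>topspace T. strongly_zero_dim_at T \<U> x)"

definition open_subgroups :: "('a, 'b) monoid_scheme \<Rightarrow> 'a topology \<Rightarrow> 'a set set" where
  "open_subgroups G T = {A. subgroup A G \<and> openin T A}"

definition open_subgroups_local_base :: "('a, 'b) monoid_scheme \<Rightarrow> 'a topology \<Rightarrow> bool" where
  "open_subgroups_local_base G T \<longleftrightarrow>
     (\<forall>W. openin T W \<and> \<one>\<^bsub>G\<^esub> \<in> W \<longrightarrow> (\<exists>A\<in>open_subgroups G T. A \<subseteq> W))"

end

theory Submission
  imports Defs
begin



lemma tg_group: "topological_group G T \<Longrightarrow> group G"
  by (simp add: topological_group_def)
lemma tg_top: "topological_group G T \<Longrightarrow> topspace T = carrier G"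
  by (simp add: topological_group_def)

lemma tg_lmult_cont:
  assumes "topological_group G T" "c \<in> carrier G"
  shows "continuous_map T T (\<lambda>y. c \<otimes>\<^bsub>G\<^esub> y)"
proof -
  have m: "continuous_map (prod_topology T T) T (\<lambda>(x, y). x \<otimes>\<^bsub>G\<^esub> y)"
    using assms(1) by (simp add: topological_group_def)
  have p: "continuous_map T (prod_topology T T) (\<lambda>y. (c, y))"
    using assms tg_top[OF assms(1)] by (intro continuous_map_pairedI) auto
  have "continuous_map T T ((\<lambda>(x, y). x \<otimes>\<^bsub>G\<^esub> y) \<circ> (\<lambda>y. (c, y)))"
    using continuous_map_compose[OF p m] .
  then show ?thesis by (simp add: o_def)
qed

lemma tg_open_nbhd:
  assumes tg: "topological_group G T" and H: "H \<subseteq> carrier G"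
    and W: "openin T W" "\<one>\<^bsub>G\<^esub> \<in> W" and cl: "\<And>h w. h \<in> H \<Longrightarrow> w \<in> W \<Longrightarrow> h \<otimes>\<^bsub>G\<^esub> w \<in> H"
  shows "openin T H"
proof -
  interpret G: group G using tg_group[OF tg] .
  have top: "topspace T = carrier G" using tg_top[OF tg] .
  show ?thesis
  proof (subst openin_subopen, intro ballI)
    fix h assume h: "h \<in> H"
    hence hc: "h \<in> carrier G" using H by auto
    let ?S = "{y \<in> topspace T. inv\<^bsub>G\<^esub> h \<otimes>\<^bsub>G\<^esub> y \<in> W}"
    have "openin T ?S"
      by (rule openin_continuous_map_preimage[OF tg_lmult_cont[OF tg] W(1)]) (use hc in simp)
    moreover have "h \<in> ?S" using hc top W by simp
    moreover have "?S \<subseteq> H"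
    proof
      fix y assume y: "y \<in> ?S"
      hence yc: "y \<in> carrier G" using top by auto
      have "h \<otimes>\<^bsub>G\<^esub> (inv\<^bsub>G\<^esub> h \<otimes>\<^bsub>G\<^esub> y) \<in> H" using cl[OF h] y by auto
      also have "h \<otimes>\<^bsub>G\<^esub> (inv\<^bsub>G\<^esub> h \<otimes>\<^bsub>G\<^esub> y) = y"
        using hc yc by (simp add: G.m_assoc[symmetric])
      finally show "y \<in> H" .
    qed
    ultimately show "\<exists>S. openin T S \<and> h \<in> S \<and> S \<subseteq> H" by blast
  qed
qed

lemma left_ent_mem:
  "(x, y) \<in> left_ent G A \<longleftrightarrow> x \<in> carrier G \<and> y \<in> carrier G \<and> inv\<^bsub>G\<^esub> x \<otimes>\<^bsub>G\<^esub> y \<in> A"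
  by (simp add: left_ent_def)

lemma left_unif_mem:
  "U \<in> left_uniformity G T \<longleftrightarrow> U \<subseteq> carrier G \<times> carrier G \<and>
     (\<exists>W. openin T W \<and> \<one>\<^bsub>G\<^esub> \<in> W \<and> left_ent G W \<subseteq> U)"
  unfolding left_uniformity_def uniformity_generated_def by blast

lemma left_ent_sub: "left_ent G A \<subseteq> carrier G \<times> carrier G"
  by (auto simp: left_ent_def)

lemma left_ent_open_unif:
  assumes "A \<in> open_subgroups G T"
  shows "left_ent G A \<in> left_uniformity G T"
  using assms unfolding left_unif_mem open_subgroups_def
  by (auto simp: left_ent_sub subgroup.one_closed)

lemma left_ent_equiv:
  assumes tg: "topological_group G T" and A: "subgroup A G"
  shows "equiv (carrier G) (left_ent G A)"
proof -
  interpret G: group G using tg_group[OF tg] .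
  have Ac: "A \<subseteq> carrier G" using A subgroup.subset by blast
  show ?thesis
  proof (rule equivI)
    show "refl_on (carrier G) (left_ent G A)"
      by (auto simp: refl_on_def left_ent_def subgroup.one_closed[OF A])
    show "sym (left_ent G A)"
    proof (rule symI)
      fix x y assume "(x, y) \<in> left_ent G A"
      hence xy: "x \<in> carrier G" "y \<in> carrier G" "inv\<^bsub>G\<^esub> x \<otimes>\<^bsub>G\<^esub> y \<in> A" by (auto simp: left_ent_def)
      have "inv\<^bsub>G\<^esub> (inv\<^bsub>G\<^esub> x \<otimes>\<^bsub>G\<^esub> y) \<in> A" using subgroup.m_inv_closed[OF A xy(3)] .
      also have "inv\<^bsub>G\<^esub> (inv\<^bsub>G\<^esub> x \<otimes>\<^bsub>G\<^esub> y) = inv\<^bsub>G\<^esub> y \<otimes>\<^bsub>G\<^esub> x"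
        using xy by (simp add: G.inv_mult_group)
      finally show "(y, x) \<in> left_ent G A" using xy by (simp add: left_ent_def)
    qed
    show "trans (left_ent G A)"
    proof (rule transI)
      fix x y z assume "(x, y) \<in> left_ent G A" "(y, z) \<in> left_ent G A"
      hence xy: "x \<in> carrier G" "y \<in> carrier G" "z \<in> carrier G" "inv\<^bsub>G\<^esub> x \<otimes>\<^bsub>G\<^esub> y \<in> A"
         "inv\<^bsub>G\<^esub> y \<otimes>\<^bsub>G\<^esub> z \<in> A" by (auto simp: left_ent_def)
      have "(inv\<^bsub>G\<^esub> x \<otimes>\<^bsub>G\<^esub> y) \<otimes>\<^bsub>G\<^esub> (inv\<^bsub>G\<^esub> y \<otimes>\<^bsub>G\<^esub> z) \<in> A"
        using subgroup.m_closed[OF A xy(4,5)] .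
      also have "(inv\<^bsub>G\<^esub> x \<otimes>\<^bsub>G\<^esub> y) \<otimes>\<^bsub>G\<^esub> (inv\<^bsub>G\<^esub> y \<otimes>\<^bsub>G\<^esub> z) = inv\<^bsub>G\<^esub> x \<otimes>\<^bsub>G\<^esub> z"
        using xy by (simp add: G.m_assoc[symmetric]) (simp add: G.m_assoc)
      finally show "(x, z) \<in> left_ent G A" using xy by (simp add: left_ent_def)
    qed
  qed (rule left_ent_sub)
qed

lemma part1:
  assumes tg: "topological_group G T" and U: "U \<in> left_uniformity G T"
    and eq: "equiv (carrier G) U"
  shows "(\<Inter>g\<in>carrier G. g <#\<^bsub>G\<^esub> (U `` {inv\<^bsub>G\<^esub> g})) \<in> open_subgroups G T
     \<and> left_ent G (\<Inter>g\<in>carrier G. g <#\<^bsub>G\<^esub> (U `` {inv\<^bsub>G\<^esub> g})) \<subseteq> U"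
proof -
  interpret G: group G using tg_group[OF tg] .
  have Usub: "U \<subseteq> carrier G \<times> carrier G" using eq by (auto simp: equiv_def refl_on_def)
  have Urefl: "\<And>x. x \<in> carrier G \<Longrightarrow> (x, x) \<in> U" using eq by (auto simp: equiv_def refl_on_def)
  have Usym: "\<And>x y. (x, y) \<in> U \<Longrightarrow> (y, x) \<in> U" using eq by (auto simp: equiv_def sym_def)
  have Utr: "\<And>x y z. (x, y) \<in> U \<Longrightarrow> (y, z) \<in> U \<Longrightarrow> (x, z) \<in> U"
    using eq by (auto simp: equiv_def trans_def)
  obtain W where W: "openin T W" "\<one>\<^bsub>G\<^esub> \<in> W" "left_ent G W \<subseteq> U"
    using U unfolding left_unif_mem by blast
  have Wc: "W \<subseteq> carrier G" using openin_subset[OF W(1)] tg_top[OF tg] by simp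
  define A where "A = {a \<in> carrier G. \<forall>x\<in>carrier G. (x, x \<otimes>\<^bsub>G\<^esub> a) \<in> U}"
  have Aeq: "(\<Inter>g\<in>carrier G. g <#\<^bsub>G\<^esub> (U `` {inv\<^bsub>G\<^esub> g})) = A"
  proof (intro Set.set_eqI iffI)
    fix a assume a: "a \<in> (\<Inter>g\<in>carrier G. g <#\<^bsub>G\<^esub> (U `` {inv\<^bsub>G\<^esub> g}))"
    have mem: "\<And>g. g \<in> carrier G \<Longrightarrow> \<exists>s. (inv\<^bsub>G\<^esub> g, s) \<in> U \<and> a = g \<otimes>\<^bsub>G\<^esub> s"
      using a by (auto simp: l_coset_def)
    obtain s where s: "(inv\<^bsub>G\<^esub> \<one>\<^bsub>G\<^esub>, s) \<in> U" "a = \<one>\<^bsub>G\<^esub> \<otimes>\<^bsub>G\<^esub> s"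
      using mem[OF G.one_closed] by blast
    have ac: "a \<in> carrier G" using s Usub by auto
    have "(x, x \<otimes>\<^bsub>G\<^esub> a) \<in> U" if x: "x \<in> carrier G" for x
    proof -
      obtain t where t: "(inv\<^bsub>G\<^esub> (inv\<^bsub>G\<^esub> x), t) \<in> U" "a = inv\<^bsub>G\<^esub> x \<otimes>\<^bsub>G\<^esub> t"
        using mem[of "inv\<^bsub>G\<^esub> x"] x by auto
      have tc: "t \<in> carrier G" using t Usub by auto
      have "x \<otimes>\<^bsub>G\<^esub> a = t" using t(2) x tc by (simp add: G.m_assoc[symmetric])
      thus ?thesis using t(1) x by simp
    qed
    thus "a \<in> A" using ac by (simp add: A_def)
  next
    fix a assume a: "a \<in> A"
    show "a \<in> (\<Inter>g\<in>carrier G. g <#\<^bsub>G\<^esub> (U `` {inv\<^bsub>G\<^esub> g}))"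
    proof (intro INT_I)
      fix g assume g: "g \<in> carrier G"
      have ac: "a \<in> carrier G" using a by (simp add: A_def)
      have "(inv\<^bsub>G\<^esub> g, inv\<^bsub>G\<^esub> g \<otimes>\<^bsub>G\<^esub> a) \<in> U" using a g by (simp add: A_def)
      moreover have "a = g \<otimes>\<^bsub>G\<^esub> (inv\<^bsub>G\<^esub> g \<otimes>\<^bsub>G\<^esub> a)"
        using g ac by (simp add: G.m_assoc[symmetric])
      ultimately show "a \<in> g <#\<^bsub>G\<^esub> (U `` {inv\<^bsub>G\<^esub> g})" by (auto simp: l_coset_def)
    qed
  qed
  have Ac: "A \<subseteq> carrier G" by (auto simp: A_def)
  have sg: "subgroup A G"
  proof (rule G.subgroupI[OF Ac])
    show "A \<noteq> {}" using Urefl by (auto simp: A_def intro!: exI[of _ "\<one>\<^bsub>G\<^esub>"])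
  next
    fix a assume a: "a \<in> A"
    have ac: "a \<in> carrier G" using a by (simp add: A_def)
    have "(x, x \<otimes>\<^bsub>G\<^esub> inv\<^bsub>G\<^esub> a) \<in> U" if x: "x \<in> carrier G" for x
    proof -
      have "(x \<otimes>\<^bsub>G\<^esub> inv\<^bsub>G\<^esub> a, (x \<otimes>\<^bsub>G\<^esub> inv\<^bsub>G\<^esub> a) \<otimes>\<^bsub>G\<^esub> a) \<in> U"
        using a x ac by (simp add: A_def)
      also have "(x \<otimes>\<^bsub>G\<^esub> inv\<^bsub>G\<^esub> a) \<otimes>\<^bsub>G\<^esub> a = x" using x ac by (simp add: G.m_assoc)
      finally show ?thesis by (rule Usym)
    qed
    thus "inv\<^bsub>G\<^esub> a \<in> A" using ac by (simp add: A_def)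
  next
    fix a b assume a: "a \<in> A" and b: "b \<in> A"
    have ac: "a \<in> carrier G" "b \<in> carrier G" using a b by (auto simp: A_def)
    have "(x, x \<otimes>\<^bsub>G\<^esub> (a \<otimes>\<^bsub>G\<^esub> b)) \<in> U" if x: "x \<in> carrier G" for x
    proof -
      have "(x, x \<otimes>\<^bsub>G\<^esub> a) \<in> U" using a x by (simp add: A_def)
      moreover have "(x \<otimes>\<^bsub>G\<^esub> a, (x \<otimes>\<^bsub>G\<^esub> a) \<otimes>\<^bsub>G\<^esub> b) \<in> U" using b x ac by (simp add: A_def)
      ultimately show ?thesis using x ac by (simp add: G.m_assoc Utr)
    qed
    thus "a \<otimes>\<^bsub>G\<^esub> b \<in> A" using ac by (simp add: A_def)
  qed
  have op: "openin T A"
  proof (rule tg_open_nbhd[OF tg Ac W(1,2)])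
    fix h w assume h: "h \<in> A" and w: "w \<in> W"
    have hc: "h \<in> carrier G" using h by (simp add: A_def)
    have wc: "w \<in> carrier G" using w Wc by auto
    have "(x, x \<otimes>\<^bsub>G\<^esub> (h \<otimes>\<^bsub>G\<^esub> w)) \<in> U" if x: "x \<in> carrier G" for x
    proof -
      have "(x, x \<otimes>\<^bsub>G\<^esub> h) \<in> U" using h x by (simp add: A_def)
      moreover have "(x \<otimes>\<^bsub>G\<^esub> h, (x \<otimes>\<^bsub>G\<^esub> h) \<otimes>\<^bsub>G\<^esub> w) \<in> left_ent G W"
      proof -
        have "inv\<^bsub>G\<^esub> (x \<otimes>\<^bsub>G\<^esub> h) \<otimes>\<^bsub>G\<^esub> ((x \<otimes>\<^bsub>G\<^esub> h) \<otimes>\<^bsub>G\<^esub> w) = w"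
          using x hc wc by (metis G.m_closed G.l_inv G.m_assoc G.l_one G.inv_closed)
        thus ?thesis using x hc wc w by (simp add: left_ent_def)
      qed
      ultimately show ?thesis using W(3) x hc wc by (auto simp: G.m_assoc intro: Utr)
    qed
    thus "h \<otimes>\<^bsub>G\<^esub> w \<in> A" using hc wc by (simp add: A_def)
  qed
  have sub: "left_ent G A \<subseteq> U"
  proof
    fix p assume "p \<in> left_ent G A"
    then obtain x y where p: "p = (x, y)" "x \<in> carrier G" "y \<in> carrier G" "inv\<^bsub>G\<^esub> x \<otimes>\<^bsub>G\<^esub> y \<in> A"
      by (auto simp: left_ent_def)
    have "(x, x \<otimes>\<^bsub>G\<^esub> (inv\<^bsub>G\<^esub> x \<otimes>\<^bsub>G\<^esub> y)) \<in> U" using p by (simp add: A_def)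
    thus "p \<in> U" using p by (simp add: G.m_assoc[symmetric])
  qed
  show ?thesis using Aeq sg op sub by (simp add: open_subgroups_def)
qed

lemma base_part:
  assumes tg: "topological_group G T"
  shows "is_uniformity_base {left_ent G A | A. A \<in> open_subgroups G T}
        (eq_uniformity (carrier G) (left_uniformity G T))"
  unfolding is_uniformity_base_def
proof (intro conjI ballI subsetI)
  fix V assume "V \<in> {left_ent G A | A. A \<in> open_subgroups G T}"
  then obtain A where A: "A \<in> open_subgroups G T" "V = left_ent G A" by blast
  have "V \<in> {U \<in> left_uniformity G T. equiv (carrier G) U}"
    using A left_ent_open_unif[OF A(1)] left_ent_equiv[OF tg] by (auto simp: open_subgroups_def)
  thus "V \<in> eq_uniformity (carrier G) (left_uniformity G T)"
    unfolding eq_uniformity_def uniformity_generated_def using A left_ent_sub by blast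
next
  fix U assume "U \<in> eq_uniformity (carrier G) (left_uniformity G T)"
  then obtain V where V: "V \<in> left_uniformity G T" "equiv (carrier G) V" "V \<subseteq> U"
    unfolding eq_uniformity_def uniformity_generated_def by blast
  from part1[OF tg V(1,2)] V(3)
  show "\<exists>V\<in>{left_ent G A | A. A \<in> open_subgroups G T}. V \<subseteq> U" by blast
qed

lemma lb_uzd:
  assumes tg: "topological_group G T" and lb: "open_subgroups_local_base G T"
  shows "uniformly_zero_dim (carrier G) (left_uniformity G T)"
  unfolding uniformly_zero_dim_def is_uniformity_base_def
proof (intro conjI ballI)
  fix U assume U: "U \<in> left_uniformity G T"
  then obtain W where W: "openin T W" "\<one>\<^bsub>G\<^esub> \<in> W" "left_ent G W \<subseteq> U"
    unfolding left_unif_mem by blast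
  obtain A where A: "A \<in> open_subgroups G T" "A \<subseteq> W" using lb W unfolding open_subgroups_local_base_def by blast
  have "left_ent G A \<subseteq> left_ent G W" using A by (auto simp: left_ent_def)
  thus "\<exists>V\<in>{U \<in> left_uniformity G T. equiv (carrier G) U}. V \<subseteq> U"
    using A left_ent_open_unif[OF A(1)] left_ent_equiv[OF tg] W(3)
    by (intro bexI[of _ "left_ent G A"]) (auto simp: open_subgroups_def)
qed auto

lemma uzd_lb:
  assumes tg: "topological_group G T" and u: "uniformly_zero_dim (carrier G) (left_uniformity G T)"
  shows "open_subgroups_local_base G T"
  unfolding open_subgroups_local_base_def
proof (intro allI impI)
  fix W assume W: "openin T W \<and> \<one>\<^bsub>G\<^esub> \<in> W"
  interpret G: group G using tg_group[OF tg] .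
  have Wc: "W \<subseteq> carrier G" using openin_subset[of T W] W tg_top[OF tg] by simp
  have "left_ent G W \<in> left_uniformity G T" using W left_ent_sub unfolding left_unif_mem by blast
  then obtain V where V: "V \<in> left_uniformity G T" "equiv (carrier G) V" "V \<subseteq> left_ent G W"
    using u unfolding uniformly_zero_dim_def is_uniformity_base_def by blast
  from part1[OF tg V(1,2)] V(3) obtain A where A: "A \<in> open_subgroups G T" "left_ent G A \<subseteq> left_ent G W"
    by blast
  have "A \<subseteq> W"
  proof
    fix a assume a: "a \<in> A"
    have ac: "a \<in> carrier G" using a A(1) subgroup.subset by (auto simp: open_subgroups_def)
    have "(\<one>\<^bsub>G\<^esub>, a) \<in> left_ent G A" using a ac by (simp add: left_ent_def)
    hence "(\<one>\<^bsub>G\<^esub>, a) \<in> left_ent G W" using A(2) by blast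
    thus "a \<in> W" using ac by (simp add: left_ent_def)
  qed
  thus "\<exists>A\<in>open_subgroups G T. A \<subseteq> W" using A by blast
qed

lemma lb_szd:
  assumes tg: "topological_group G T" and lb: "open_subgroups_local_base G T"
  shows "strongly_zero_dim T (left_uniformity G T)"
  unfolding strongly_zero_dim_def strongly_zero_dim_at_def
proof (intro ballI allI impI)
  interpret G: group G using tg_group[OF tg] .
  have top: "topspace T = carrier G" using tg_top[OF tg] .
  fix x W assume x: "x \<in> topspace T" and W: "openin T W \<and> x \<in> W"
  hence xc: "x \<in> carrier G" using top by simp
  let ?W' = "{y \<in> topspace T. x \<otimes>\<^bsub>G\<^esub> y \<in> W}"
  have "openin T ?W'" using W by (intro openin_continuous_map_preimage[OF tg_lmult_cont[OF tg xc]]) auto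
  moreover have "\<one>\<^bsub>G\<^esub> \<in> ?W'" using W xc top by simp
  ultimately obtain A where A: "A \<in> open_subgroups G T" "A \<subseteq> ?W'"
    using lb unfolding open_subgroups_local_base_def by blast
  have sg: "subgroup A G" using A by (simp add: open_subgroups_def)
  have Ac: "A \<subseteq> carrier G" using subgroup.subset[OF sg] .
  define V where "V = x <#\<^bsub>G\<^esub> A"
  have "V \<subseteq> W" using A by (auto simp: V_def l_coset_def)
  moreover have "x \<in> V" using xc subgroup.one_closed[OF sg] unfolding V_def l_coset_def
    by (auto intro!: bexI[of _ "\<one>\<^bsub>G\<^esub>"])
  moreover have "uniformly_separated (left_uniformity G T) V (topspace T - V)"
    unfolding uniformly_separated_def
  proof (intro bexI[of _ "left_ent G A"] ballI)
    show "left_ent G A \<in> left_uniformity G T" using left_ent_open_unif[OF A(1)] .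
    fix v y assume v: "v \<in> V" and y: "y \<in> topspace T - V"
    show "(v, y) \<notin> left_ent G A"
    proof
      assume vy: "(v, y) \<in> left_ent G A"
      obtain a where a: "a \<in> A" "v = x \<otimes>\<^bsub>G\<^esub> a" using v by (auto simp: V_def l_coset_def)
      have ac: "a \<in> carrier G" using a Ac by auto
      have yc: "y \<in> carrier G" using y top by auto
      have b: "inv\<^bsub>G\<^esub> v \<otimes>\<^bsub>G\<^esub> y \<in> A" using vy by (simp add: left_ent_def)
      have "a \<otimes>\<^bsub>G\<^esub> (inv\<^bsub>G\<^esub> v \<otimes>\<^bsub>G\<^esub> y) \<in> A" using subgroup.m_closed[OF sg a(1) b] .
      moreover have "x \<otimes>\<^bsub>G\<^esub> (a \<otimes>\<^bsub>G\<^esub> (inv\<^bsub>G\<^esub> v \<otimes>\<^bsub>G\<^esub> y)) = y"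
        using a(2) xc ac yc by (metis G.m_closed G.r_inv G.m_assoc G.l_one G.inv_closed)
      ultimately have "y \<in> V" unfolding V_def l_coset_def by force
      thus False using y by simp
    qed
  qed
  ultimately show "\<exists>V. V \<subseteq> W \<and> x \<in> V \<and> uniformly_separated (left_uniformity G T) V (topspace T - V)"
    by blast
qed

lemma szd_at1:
  assumes tg: "topological_group G T" and s: "strongly_zero_dim T (left_uniformity G T)"
  shows "strongly_zero_dim_at T (left_uniformity G T) \<one>\<^bsub>G\<^esub>"
proof -
  interpret G: group G using tg_group[OF tg] .
  show ?thesis using s tg_top[OF tg] by (simp add: strongly_zero_dim_def)
qed

lemma szdat_lb:
  assumes tg: "topological_group G T" and s: "strongly_zero_dim_at T (left_uniformity G T) \<one>\<^bsub>G\<^esub>"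
  shows "open_subgroups_local_base G T"
  unfolding open_subgroups_local_base_def
proof (intro allI impI)
  interpret G: group G using tg_group[OF tg] .
  have top: "topspace T = carrier G" using tg_top[OF tg] .
  fix W assume W: "openin T W \<and> \<one>\<^bsub>G\<^esub> \<in> W"
  have Wc: "W \<subseteq> carrier G" using openin_subset[of T W] W top by simp
  obtain V U where V: "V \<subseteq> W" "\<one>\<^bsub>G\<^esub> \<in> V" "U \<in> left_uniformity G T"
      "\<And>v y. v \<in> V \<Longrightarrow> y \<in> topspace T - V \<Longrightarrow> (v, y) \<notin> U"
    using s W unfolding strongly_zero_dim_at_def uniformly_separated_def by meson
  have Vc: "V \<subseteq> carrier G" using V Wc by auto
  obtain W0 where W0: "openin T W0" "\<one>\<^bsub>G\<^esub> \<in> W0" "left_ent G W0 \<subseteq> U"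
    using V(3) unfolding left_unif_mem by blast
  have W0c: "W0 \<subseteq> carrier G" using openin_subset[OF W0(1)] top by simp
  have K: "v \<otimes>\<^bsub>G\<^esub> w \<in> V" if v: "v \<in> V" and w: "w \<in> W0" for v w
  proof (rule ccontr)
    assume n: "v \<otimes>\<^bsub>G\<^esub> w \<notin> V"
    have vc: "v \<in> carrier G" and wc: "w \<in> carrier G" using v w Vc W0c by auto
    have "inv\<^bsub>G\<^esub> v \<otimes>\<^bsub>G\<^esub> (v \<otimes>\<^bsub>G\<^esub> w) = w"
      using vc wc by (simp add: G.m_assoc[symmetric])
    hence "(v, v \<otimes>\<^bsub>G\<^esub> w) \<in> U" using W0(3) vc wc w by (auto simp: left_ent_def)
    moreover have "v \<otimes>\<^bsub>G\<^esub> w \<in> topspace T - V" using n vc wc top by simp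
    ultimately show False using V(4)[OF v] by blast
  qed
  define W1 where "W1 = W0 \<inter> {y \<in> topspace T. inv\<^bsub>G\<^esub> y \<in> W0}"
  have invc: "continuous_map T T (\<lambda>x. inv\<^bsub>G\<^esub> x)" using tg by (simp add: topological_group_def)
  have W1o: "openin T W1" unfolding W1_def
    by (intro openin_Int W0(1) openin_continuous_map_preimage[OF invc W0(1)])
  have W11: "\<one>\<^bsub>G\<^esub> \<in> W1" using W0 top by (simp add: W1_def)
  define H where "H = {a \<in> carrier G. \<forall>v\<in>V. v \<otimes>\<^bsub>G\<^esub> a \<in> V \<and> v \<otimes>\<^bsub>G\<^esub> inv\<^bsub>G\<^esub> a \<in> V}"
  have Hc: "H \<subseteq> carrier G" by (auto simp: H_def)
  have sg: "subgroup H G"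
  proof (rule G.subgroupI[OF Hc])
    have "\<one>\<^bsub>G\<^esub> \<in> H" using Vc by (auto simp: H_def)
    thus "H \<noteq> {}" by blast
  next
    fix a assume "a \<in> H" thus "inv\<^bsub>G\<^esub> a \<in> H" by (auto simp: H_def)
  next
    fix a b assume a: "a \<in> H" and b: "b \<in> H"
    have ac: "a \<in> carrier G" "b \<in> carrier G" using a b by (auto simp: H_def)
    have "v \<otimes>\<^bsub>G\<^esub> (a \<otimes>\<^bsub>G\<^esub> b) \<in> V \<and> v \<otimes>\<^bsub>G\<^esub> inv\<^bsub>G\<^esub> (a \<otimes>\<^bsub>G\<^esub> b) \<in> V"
      if v: "v \<in> V" for v
    proof -
      have vc: "v \<in> carrier G" using v Vc by auto
      have 1: "v \<otimes>\<^bsub>G\<^esub> a \<in> V" "v \<otimes>\<^bsub>G\<^esub> inv\<^bsub>G\<^esub> b \<in> V" using a b v by (auto simp: H_def)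
      have 2: "(v \<otimes>\<^bsub>G\<^esub> a) \<otimes>\<^bsub>G\<^esub> b \<in> V" "(v \<otimes>\<^bsub>G\<^esub> inv\<^bsub>G\<^esub> b) \<otimes>\<^bsub>G\<^esub> inv\<^bsub>G\<^esub> a \<in> V"
        using 1 a b by (auto simp: H_def)
      thus ?thesis using vc ac by (simp add: G.m_assoc G.inv_mult_group)
    qed
    thus "a \<otimes>\<^bsub>G\<^esub> b \<in> H" using ac by (simp add: H_def)
  qed
  have op: "openin T H"
  proof (rule tg_open_nbhd[OF tg Hc W1o W11])
    fix h w assume h: "h \<in> H" and w: "w \<in> W1"
    have hc: "h \<in> carrier G" using h by (simp add: H_def)
    have wc: "w \<in> carrier G" "w \<in> W0" "inv\<^bsub>G\<^esub> w \<in> W0" using w W0c by (auto simp: W1_def)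
    have "v \<otimes>\<^bsub>G\<^esub> (h \<otimes>\<^bsub>G\<^esub> w) \<in> V \<and> v \<otimes>\<^bsub>G\<^esub> inv\<^bsub>G\<^esub> (h \<otimes>\<^bsub>G\<^esub> w) \<in> V"
      if v: "v \<in> V" for v
    proof -
      have vc: "v \<in> carrier G" using v Vc by auto
      have "v \<otimes>\<^bsub>G\<^esub> h \<in> V" using h v by (simp add: H_def)
      hence 1: "(v \<otimes>\<^bsub>G\<^esub> h) \<otimes>\<^bsub>G\<^esub> w \<in> V" using K wc by blast
      have "v \<otimes>\<^bsub>G\<^esub> inv\<^bsub>G\<^esub> w \<in> V" using K v wc by blast
      hence 2: "(v \<otimes>\<^bsub>G\<^esub> inv\<^bsub>G\<^esub> w) \<otimes>\<^bsub>G\<^esub> inv\<^bsub>G\<^esub> h \<in> V" using h by (simp add: H_def)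
      show ?thesis using 1 2 vc hc wc by (simp add: G.m_assoc G.inv_mult_group)
    qed
    thus "h \<otimes>\<^bsub>G\<^esub> w \<in> H" using hc wc by (simp add: H_def)
  qed
  have "H \<subseteq> W"
  proof
    fix a assume a: "a \<in> H"
    have ac: "a \<in> carrier G" using a by (simp add: H_def)
    have "\<one>\<^bsub>G\<^esub> \<otimes>\<^bsub>G\<^esub> a \<in> V" using a V(2) unfolding H_def by blast
    thus "a \<in> W" using ac V(1) by auto
  qed
  thus "\<exists>A\<in>open_subgroups G T. A \<subseteq> W" using sg op by (auto simp: open_subgroups_def)
qed

lemma left_all:
  assumes tg: "topological_group G T"
  shows
   "(\<forall>U \<in> left_uniformity G T. equiv (carrier G) U \<longrightarrow>
       (let A = (\<Inter>g\<in>carrier G. g <#\<^bsub>G\<^esub> (U `` {inv\<^bsub>G\<^esub> g}))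
        in A \<in> open_subgroups G T \<and> left_ent G A \<subseteq> U))
    \<and> is_uniformity_base {left_ent G A | A. A \<in> open_subgroups G T}
        (eq_uniformity (carrier G) (left_uniformity G T))
    \<and> (uniformly_zero_dim (carrier G) (left_uniformity G T)
         \<longleftrightarrow> strongly_zero_dim_at T (left_uniformity G T) \<one>\<^bsub>G\<^esub>)
    \<and> (strongly_zero_dim_at T (left_uniformity G T) \<one>\<^bsub>G\<^esub>
         \<longleftrightarrow> strongly_zero_dim T (left_uniformity G T))
    \<and> (strongly_zero_dim T (left_uniformity G T) \<longleftrightarrow> open_subgroups_local_base G T)"
proof (intro conjI)
  show "\<forall>U \<in> left_uniformity G T. equiv (carrier G) U \<longrightarrow>
       (let A = (\<Inter>g\<in>carrier G. g <#\<^bsub>G\<^esub> (U `` {inv\<^bsub>G\<^esub> g}))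
        in A \<in> open_subgroups G T \<and> left_ent G A \<subseteq> U)"
    using part1[OF tg] by (simp add: Let_def)
  show "is_uniformity_base {left_ent G A | A. A \<in> open_subgroups G T}
        (eq_uniformity (carrier G) (left_uniformity G T))" by (rule base_part[OF tg])
  have a: "uniformly_zero_dim (carrier G) (left_uniformity G T) \<longleftrightarrow> open_subgroups_local_base G T"
    using lb_uzd[OF tg] uzd_lb[OF tg] by blast
  have b: "strongly_zero_dim T (left_uniformity G T) \<longleftrightarrow> open_subgroups_local_base G T"
    using lb_szd[OF tg] szd_at1[OF tg] szdat_lb[OF tg] by blast
  have c: "strongly_zero_dim_at T (left_uniformity G T) \<one>\<^bsub>G\<^esub> \<longleftrightarrow> open_subgroups_local_base G T"
    using lb_szd[OF tg] szd_at1[OF tg] szdat_lb[OF tg] by blast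
  show "uniformly_zero_dim (carrier G) (left_uniformity G T)
         \<longleftrightarrow> strongly_zero_dim_at T (left_uniformity G T) \<one>\<^bsub>G\<^esub>" using a c by simp
  show "strongly_zero_dim_at T (left_uniformity G T) \<one>\<^bsub>G\<^esub>
         \<longleftrightarrow> strongly_zero_dim T (left_uniformity G T)" using b c by simp
  show "strongly_zero_dim T (left_uniformity G T) \<longleftrightarrow> open_subgroups_local_base G T" by (rule b)
qed



definition opp :: "('a, 'b) monoid_scheme \<Rightarrow> 'a monoid" where
  "opp G = \<lparr>carrier = carrier G, mult = (\<lambda>x y. y \<otimes>\<^bsub>G\<^esub> x), one = \<one>\<^bsub>G\<^esub>\<rparr>"

lemma opp_simps [simp]: "carrier (opp G) = carrier G" "x \<otimes>\<^bsub>opp G\<^esub> y = y \<otimes>\<^bsub>G\<^esub> x"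
  "\<one>\<^bsub>opp G\<^esub> = \<one>\<^bsub>G\<^esub>"
  by (simp_all add: opp_def)

lemma opp_group: assumes "group G" shows "group (opp G)"
proof -
  interpret G: group G by fact
  show ?thesis
    by (rule groupI) (auto simp: G.m_assoc intro: bexI[of _ "inv\<^bsub>G\<^esub> x" for x])
qed

lemma opp_inv: assumes "group G" "x \<in> carrier G" shows "inv\<^bsub>opp G\<^esub> x = inv\<^bsub>G\<^esub> x"
proof -
  interpret G: group G by fact
  interpret O: group "opp G" using opp_group[OF assms(1)] .
  show ?thesis using assms(2) by (intro O.inv_equality) auto
qed

lemma opp_tg: assumes tg: "topological_group G T" shows "topological_group (opp G) T"
proof -
  have g: "group G" and top: "topspace T = carrier G"
    and m: "continuous_map (prod_topology T T) T (\<lambda>(x, y). x \<otimes>\<^bsub>G\<^esub> y)"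
    and i: "continuous_map T T (\<lambda>x. inv\<^bsub>G\<^esub> x)"
    using tg by (auto simp: topological_group_def)
  have sw: "continuous_map (prod_topology T T) (prod_topology T T) (\<lambda>p. (snd p, fst p))"
    by (intro continuous_map_pairedI continuous_map_fst continuous_map_snd)
  have "continuous_map (prod_topology T T) T ((\<lambda>(x, y). x \<otimes>\<^bsub>G\<^esub> y) \<circ> (\<lambda>p. (snd p, fst p)))"
    using continuous_map_compose[OF sw m] .
  hence m': "continuous_map (prod_topology T T) T (\<lambda>(x, y). x \<otimes>\<^bsub>opp G\<^esub> y)"
    by (simp add: o_def case_prod_unfold)
  have i': "continuous_map T T (\<lambda>x. inv\<^bsub>opp G\<^esub> x)"
    using i by (rule continuous_map_eq) (simp add: opp_inv[OF g] top)
  show ?thesis using opp_group[OF g] top m' i' by (simp add: topological_group_def)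
qed

lemma opp_right_ent: "group G \<Longrightarrow> right_ent G A = left_ent (opp G) A"
  by (auto simp: left_ent_def right_ent_def opp_inv)

lemma opp_right_unif: "group G \<Longrightarrow> right_uniformity G T = left_uniformity (opp G) T"
  by (simp add: left_uniformity_def right_uniformity_def opp_right_ent)

lemma opp_subgroup: assumes "group G" shows "subgroup A (opp G) \<longleftrightarrow> subgroup A G"
proof (cases "A \<subseteq> carrier G")
  case True
  have e: "\<And>x. x \<in> A \<Longrightarrow> inv\<^bsub>opp G\<^esub> x = inv\<^bsub>G\<^esub> x" using opp_inv[OF assms] True by blast
  show ?thesis unfolding subgroup_def using True by (auto simp: e)
next
  case False
  thus ?thesis by (auto simp: subgroup_def)
qed

lemma opp_open_subgroups: "group G \<Longrightarrow> open_subgroups (opp G) T = open_subgroups G T"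
  by (simp add: open_subgroups_def opp_subgroup)

lemma opp_coset: assumes "group G" "g \<in> carrier G"
  shows "(U `` {inv\<^bsub>G\<^esub> g}) #>\<^bsub>G\<^esub> g = g <#\<^bsub>opp G\<^esub> (U `` {inv\<^bsub>opp G\<^esub> g})"
  using assms by (simp add: opp_inv l_coset_def r_coset_def)

lemma opp_INT: assumes "group G"
  shows "(\<Inter>g\<in>carrier G. (U `` {inv\<^bsub>G\<^esub> g}) #>\<^bsub>G\<^esub> g)
       = (\<Inter>g\<in>carrier G. g <#\<^bsub>opp G\<^esub> (U `` {inv\<^bsub>opp G\<^esub> g}))"
  using opp_coset[OF assms] by simp

lemma right_all:
  assumes tg: "topological_group G T"
  shows
   "(\<forall>U \<in> right_uniformity G T. equiv (carrier G) U \<longrightarrow>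
       (let A = (\<Inter>g\<in>carrier G. (U `` {inv\<^bsub>G\<^esub> g}) #>\<^bsub>G\<^esub> g)
        in A \<in> open_subgroups G T \<and> right_ent G A \<subseteq> U))
    \<and> is_uniformity_base {right_ent G A | A. A \<in> open_subgroups G T}
        (eq_uniformity (carrier G) (right_uniformity G T))
    \<and> (uniformly_zero_dim (carrier G) (right_uniformity G T)
         \<longleftrightarrow> strongly_zero_dim_at T (right_uniformity G T) \<one>\<^bsub>G\<^esub>)
    \<and> (strongly_zero_dim_at T (right_uniformity G T) \<one>\<^bsub>G\<^esub>
         \<longleftrightarrow> strongly_zero_dim T (right_uniformity G T))
    \<and> (strongly_zero_dim T (right_uniformity G T) \<longleftrightarrow> open_subgroups_local_base G T)"
proof -
  have g: "group G" using tg_group[OF tg] .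
  have lb: "open_subgroups_local_base (opp G) T = open_subgroups_local_base G T"
    by (simp add: open_subgroups_local_base_def opp_open_subgroups[OF g])
  show ?thesis
    using left_all[OF opp_tg[OF tg]]
    by (simp only: opp_simps opp_INT[OF g, symmetric] opp_right_ent[OF g, symmetric]
        opp_right_unif[OF g, symmetric] opp_open_subgroups[OF g] lb) blast
qed


theorem mainTheorem15:
  fixes G :: "('a, 'b) monoid_scheme" and T :: "'a topology"
  assumes "topological_group G T"
  shows
   "(\<forall>U \<in> left_uniformity G T. equiv (carrier G) U \<longrightarrow>
       (let A = (\<Inter>g\<in>carrier G. g <#\<^bsub>G\<^esub> (U `` {inv\<^bsub>G\<^esub> g}))
        in A \<in> open_subgroups G T \<and> left_ent G A \<subseteq> U))
    \<and> is_uniformity_base {left_ent G A | A. A \<in> open_subgroups G T}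
        (eq_uniformity (carrier G) (left_uniformity G T))
    \<and> (uniformly_zero_dim (carrier G) (left_uniformity G T)
         \<longleftrightarrow> strongly_zero_dim_at T (left_uniformity G T) \<one>\<^bsub>G\<^esub>)
    \<and> (strongly_zero_dim_at T (left_uniformity G T) \<one>\<^bsub>G\<^esub>
         \<longleftrightarrow> strongly_zero_dim T (left_uniformity G T))
    \<and> (strongly_zero_dim T (left_uniformity G T) \<longleftrightarrow> open_subgroups_local_base G T)
    \<and> (\<forall>U \<in> right_uniformity G T. equiv (carrier G) U \<longrightarrow>
       (let A = (\<Inter>g\<in>carrier G. (U `` {inv\<^bsub>G\<^esub> g}) #>\<^bsub>G\<^esub> g)
        in A \<in> open_subgroups G T \<and> right_ent G A \<subseteq> U))
    \<and> is_uniformity_base {right_ent G A | A. A \<in> open_subgroups G T}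
        (eq_uniformity (carrier G) (right_uniformity G T))
    \<and> (uniformly_zero_dim (carrier G) (right_uniformity G T)
         \<longleftrightarrow> strongly_zero_dim_at T (right_uniformity G T) \<one>\<^bsub>G\<^esub>)
    \<and> (strongly_zero_dim_at T (right_uniformity G T) \<one>\<^bsub>G\<^esub>
         \<longleftrightarrow> strongly_zero_dim T (right_uniformity G T))
    \<and> (strongly_zero_dim T (right_uniformity G T) \<longleftrightarrow> open_subgroups_local_base G T)"
    using left_all[OF assms] right_all[OF assms] by blast

end
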